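(* Let $B$ be a real-valued standard Brownian motion with $B_0=0$. With probability one, there exists an integer $N\ge1$ such that for every $n\ge N$ and every integer $\ell\in[2^{n-1},2^n-n^{3/2}]$, at least one of the intervals $I_k=[\ell+k,\ell+k+1]$, for integers $k$ with $0\le k\le n^{3/2}-1$, satisfies $\mathrm{Osc}_{I_k}(B)>\log\log n$.
   Context: For a function $f:\mathbb R^+\to\mathbb R$ and an interval $I\subset\mathbb R^+$, $\mathrm{Osc}_I(f)=\sup_I f-\inf_I f$. *)

theory Defs
  imports "HOL-Probability.Probability"
begin

text \<open>Standard real-valued Brownian motion started at 0 on the probability space M,
  indexed by time t \<ge> 0 (values of B at negative times are irrelevant).\<close>
definition brownian_motion :: "'a measure \<Rightarrow> (real \<Rightarrow> 'a \<Rightarrow> real) \<Rightarrow> bool" where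
  "brownian_motion M B \<longleftrightarrow>
     prob_space M \<and>
     (\<forall>t\<ge>0. B t \<in> borel_measurable M) \<and>
     (AE \<omega> in M. B 0 \<omega> = 0) \<and>
     (AE \<omega> in M. continuous_on {0..} (\<lambda>t. B t \<omega>)) \<and>
     (\<forall>s t. 0 \<le> s \<and> s < t \<longrightarrow>
        distributed M lborel (\<lambda>\<omega>. B t \<omega> - B s \<omega>) (normal_density 0 (sqrt (t - s)))) \<and>
     (\<forall>(ts::nat \<Rightarrow> real) n. 0 \<le> ts 0 \<and> (\<forall>i<n. ts i < ts (Suc i)) \<longrightarrow>
        prob_space.indep_vars M (\<lambda>_. borel) (\<lambda>i \<omega>. B (ts (Suc i)) \<omega> - B (ts i) \<omega>) {..<n})"

definition Osc :: "(real \<Rightarrow> real) \<Rightarrow> real \<Rightarrow> real \<Rightarrow> real" where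
  "Osc f a b = (SUP t\<in>{a..b}. f t) - (INF t\<in>{a..b}. f t)"

end

theory Submission
  imports Defs "HOL-Real_Asymp.Real_Asymp"
begin

lemma osc_ge:
  fixes f :: "real \<Rightarrow> real"
  assumes "continuous_on {a..b} f" "a \<le> b"
  shows "\<bar>f b - f a\<bar> \<le> Osc f a b"
proof -
  have cpt: "compact (f ` {a..b})" using assms(1) compact_continuous_image by blast
  hence ba: "bdd_above (f ` {a..b})" and bb: "bdd_below (f ` {a..b})"
    by (auto intro: bounded_imp_bdd_above bounded_imp_bdd_below compact_imp_bounded)
  have "f a \<le> (SUP t\<in>{a..b}. f t)" "f b \<le> (SUP t\<in>{a..b}. f t)"
    using assms(2) by (auto intro!: cSUP_upper ba)
  moreover have "(INF t\<in>{a..b}. f t) \<le> f a" "(INF t\<in>{a..b}. f t) \<le> f b"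
    using assms(2) by (auto intro!: cINF_lower bb)
  ultimately show ?thesis unfolding Osc_def by linarith
qed

lemma (in prob_space) normal_tail:
  assumes X: "distributed M lborel X (normal_density 0 1)" and c: "0 \<le> c"
  shows "normal_density 0 1 (c+1) \<le> prob {\<omega>\<in>space M. c < \<bar>X \<omega>\<bar>}"
proof -
  have Xm[measurable]: "X \<in> borel_measurable M" using X distributed_measurable by force
  have "ennreal (normal_density 0 1 (c+1)) = (\<integral>\<^sup>+x. ennreal (normal_density 0 1 (c+1)) * indicator {c<..<c+1} x \<partial>lborel)"
    by (simp add: nn_integral_cmult_indicator)
  also have "\<dots> \<le> (\<integral>\<^sup>+x. ennreal (normal_density 0 1 x) * indicator {c<..<c+1} x \<partial>lborel)"
  proof (intro nn_integral_mono)
    fix x show "ennreal (normal_density 0 1 (c+1)) * indicator {c<..<c+1} x \<le> ennreal (normal_density 0 1 x) * indicator {c<..<c+1} x"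
    proof (cases "x \<in> {c<..<c+1}")
      case True
      hence "x\<^sup>2 \<le> (c+1)\<^sup>2" using c by (intro power_mono) auto
      hence "normal_density 0 1 (c+1) \<le> normal_density 0 1 x"
        unfolding std_normal_density_def by (intro mult_left_mono) auto
      thus ?thesis using True by (auto intro: ennreal_leI)
    qed auto
  qed
  also have "\<dots> = emeasure M (X -` {c<..<c+1} \<inter> space M)"
    using distributed_emeasure[OF X, of "{c<..<c+1}"] by simp
  also have "\<dots> \<le> emeasure M {\<omega>\<in>space M. c < \<bar>X \<omega>\<bar>}"
    by (intro emeasure_mono) auto
  finally show ?thesis by (simp add: emeasure_eq_measure)
qed

lemma asymp_aux: "\<exists>N::nat. \<forall>n\<ge>N. 3 \<le> normal_density 0 1 (ln (ln (real n)) + 1) * (sqrt (real n) - 1)"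
proof -
  have "eventually (\<lambda>x::real. exp (- ((ln (ln x) + 1) ^ 2) / 2) / sqrt (2*pi) * (sqrt x - 1) \<ge> 3) at_top"
    by real_asymp
  then obtain x0 where x0: "\<And>x. x \<ge> x0 \<Longrightarrow> exp (- ((ln (ln x) + 1) ^ 2) / 2) / sqrt (2*pi) * (sqrt x - 1) \<ge> 3"
    by (auto simp: eventually_at_top_linorder)
  show ?thesis
  proof (intro exI allI impI)
    fix n assume "nat \<lceil>x0\<rceil> \<le> n"
    hence "x0 \<le> real n" by linarith
    from x0[OF this] show "3 \<le> normal_density 0 1 (ln (ln (real n)) + 1) * (sqrt (real n) - 1)"
      unfolding std_normal_density_def by simp
  qed
qed

lemma powr32: "real n powr (3/2) = real n * sqrt (real n)"
proof (cases "n = 0")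
  case False
  have "real n powr (3/2) = real n powr (1 + 1/2)" by simp
  also have "\<dots> = real n powr 1 * real n powr (1/2)" by (rule powr_add)
  finally show ?thesis using False by (simp add: powr_half_sqrt)
qed simp

theorem lemma5:
  fixes M :: "'a measure" and B :: "real \<Rightarrow> 'a \<Rightarrow> real"
  assumes "brownian_motion M B"
  shows "AE \<omega> in M. \<exists>N::nat. N \<ge> 1 \<and>
           (\<forall>n::nat. n \<ge> N \<longrightarrow>
             (\<forall>l::int. 2 ^ (n - 1) \<le> real_of_int l \<and> real_of_int l \<le> 2 ^ n - real n powr (3/2) \<longrightarrow>
               (\<exists>k::int. 0 \<le> k \<and> real_of_int k \<le> real n powr (3/2) - 1 \<and>
                  Osc (\<lambda>t. B t \<omega>) (real_of_int (l + k)) (real_of_int (l + k + 1)) > ln (ln (real n)))))"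
proof -
  note bm = assms[unfolded brownian_motion_def]
  interpret prob_space M using bm by blast
  have Bm: "\<And>t. 0 \<le> t \<Longrightarrow> B t \<in> borel_measurable M" using bm by blast
  have Bdist: "\<And>s t. 0 \<le> s \<Longrightarrow> s < t \<Longrightarrow>
        distributed M lborel (\<lambda>\<omega>. B t \<omega> - B s \<omega>) (normal_density 0 (sqrt (t - s)))"
    using bm by blast
  have Bind: "\<And>(ts::nat \<Rightarrow> real) n. 0 \<le> ts 0 \<Longrightarrow> (\<forall>i<n. ts i < ts (Suc i)) \<Longrightarrow>
        indep_vars (\<lambda>_. borel) (\<lambda>i \<omega>. B (ts (Suc i)) \<omega> - B (ts i) \<omega>) {..<n}"
    using bm by blast
  define c where "c n = ln (ln (real n))" for n :: nat
  define s where "s n = nat \<lfloor>sqrt (real n)\<rfloor>" for n :: nat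
  define m where "m n = n * s n" for n :: nat
  define X where "X j k \<omega> = B (real j + real (Suc k)) \<omega> - B (real j + real k) \<omega>" for j k :: nat and \<omega>
  define p where "p n = normal_density 0 1 (c n + 1)" for n :: nat
  define F where "F n j = {\<omega>\<in>space M. \<forall>k<m n. \<bar>X j k \<omega>\<bar> \<le> c n}" for n j :: nat
  define A where "A n = (\<Union>j\<in>{..(2::nat)^n}. F n j)" for n :: nat
  have Xm[measurable]: "X j k \<in> borel_measurable M" for j k
    unfolding X_def by (intro borel_measurable_diff Bm) auto
  have Xd: "distributed M lborel (X j k) (normal_density 0 1)" for j k
  proof -
    have "distributed M lborel (\<lambda>\<omega>. B (real j + real (Suc k)) \<omega> - B (real j + real k) \<omega>)
       (normal_density 0 (sqrt (real j + real (Suc k) - (real j + real k))))"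
      by (rule Bdist) auto
    thus ?thesis unfolding X_def[abs_def] by simp
  qed
  have Fm: "F n j \<in> sets M" for n j unfolding F_def by measurable
  have Am: "A n \<in> sets M" for n unfolding A_def using Fm by auto
  have Fb: "prob (F n j) \<le> (1 - p n) ^ m n" if "0 < m n" "0 \<le> c n" for n j
  proof -
    define E where "E k = X j k -` {- c n .. c n} \<inter> space M" for k
    have ind: "indep_vars (\<lambda>_. borel) (X j) {..<m n}"
      using Bind[of "\<lambda>i. real j + real i" "m n"] unfolding X_def[abs_def] by simp
    hence "indep_sets (\<lambda>i. {X j i -` A \<inter> space M | A. A \<in> sets borel}) {..<m n}"
      unfolding indep_vars_def2 by blast
    hence "prob (\<Inter>k\<in>{..<m n}. E k) = (\<Prod>k\<in>{..<m n}. prob (E k))"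
      by (rule indep_setsD) (use that in \<open>auto simp: E_def\<close>)
    moreover have "F n j = (\<Inter>k\<in>{..<m n}. E k)"
      using that unfolding F_def E_def by (auto simp: abs_le_iff; smt (verit))
    moreover have "prob (E k) \<le> 1 - p n" for k
    proof -
      have "E k = space M - {\<omega>\<in>space M. c n < \<bar>X j k \<omega>\<bar>}" unfolding E_def by auto
      hence "prob (E k) = 1 - prob {\<omega>\<in>space M. c n < \<bar>X j k \<omega>\<bar>}"
        by (simp add: prob_compl)
      thus ?thesis using normal_tail[OF Xd[of j k] that(2)] unfolding p_def by linarith
    qed
    ultimately have "prob (F n j) = (\<Prod>k\<in>{..<m n}. prob (E k))" by simp
    also have "\<dots> \<le> (\<Prod>k\<in>{..<m n}. 1 - p n)"
      by (intro prod_mono) (auto intro: \<open>\<And>k. prob (E k) \<le> 1 - p n\<close>)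
    finally show ?thesis by simp
  qed
  have Ab: "prob (A n) \<le> (2 ^ n + 1) * (1 - p n) ^ m n" if "0 < m n" "0 \<le> c n" for n
  proof -
    have "prob (A n) \<le> (\<Sum>j\<in>{..(2::nat)^n}. prob (F n j))"
      unfolding A_def by (rule finite_measure_subadditive_finite) (use Fm in auto)
    also have "\<dots> \<le> (\<Sum>j\<in>{..(2::nat)^n}. (1 - p n) ^ m n)"
      by (intro sum_mono Fb that)
    finally show ?thesis by (simp add: add.commute)
  qed
  obtain N1 where N1: "\<And>n. n \<ge> N1 \<Longrightarrow> 3 \<le> p n * (sqrt (real n) - 1)"
    using asymp_aux unfolding p_def c_def by blast
  have Ab2: "prob (A n) \<le> exp (- real n)" if "n \<ge> max 4 N1" for n
  proof -
    have n3: "n \<ge> 3" using that by simp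
    have "ln (real n) > 1"
    proof -
      have "exp 1 \<le> (3::real)" using exp_le by simp
      moreover have "n \<ge> 4" using that by simp
      ultimately have "exp 1 < real n" by linarith
      thus ?thesis using ln_less_cancel_iff[of "exp 1" "real n"] using n3 by simp
    qed
    hence c0: "0 < c n" unfolding c_def by simp
    have s1: "real (s n) \<ge> sqrt (real n) - 1" unfolding s_def by linarith
    have sqrt_ge: "sqrt (real n) \<ge> 1" using n3 by simp
    hence "s n \<ge> 1" unfolding s_def by linarith
    hence m0: "0 < m n" unfolding m_def using n3 by simp
    have p0: "0 \<le> p n" unfolding p_def by simp
    have p1: "p n \<le> 1" unfolding p_def std_normal_density_def
    proof -
      have "exp (- (c n + 1)\<^sup>2 / 2) \<le> 1" by simp
      moreover have "1 / sqrt (2 * pi) \<le> 1" using pi_gt3 by (simp add: divide_simps)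
      ultimately show "1 / sqrt (2 * pi) * exp (- (c n + 1)\<^sup>2 / 2) \<le> 1"
        by (metis exp_ge_zero le_numeral_extra(4) mult_le_one zero_le_divide_1_iff real_sqrt_ge_zero)
    qed
    have pm: "p n * real (m n) \<ge> 3 * real n"
    proof -
      have "p n * real (s n) \<ge> p n * (sqrt (real n) - 1)" using s1 p0 by (intro mult_left_mono)
      hence "p n * real (s n) \<ge> 3" using N1 that by fastforce
      hence "real n * (p n * real (s n)) \<ge> real n * 3" by (intro mult_left_mono) auto
      thus ?thesis unfolding m_def by (simp add: algebra_simps)
    qed
    have "(1 - p n) ^ m n \<le> exp (- p n) ^ m n"
      using p1 by (intro power_mono) (auto simp: exp_ge_add_one_self[of "- p n", simplified])
    also have "\<dots> = exp (- (p n * real (m n)))" by (simp add: exp_of_nat_mult[symmetric] algebra_simps)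
    also have "\<dots> \<le> exp (- 3 * real n)" using pm by simp
    finally have e1: "(1 - p n) ^ m n \<le> exp (- 3 * real n)" .
    have "(2::real) ^ n + 1 \<le> 2 ^ (n+1)" by simp
    also have "\<dots> \<le> exp 1 ^ (n+1)" by (intro power_mono) (auto simp: exp_ge_add_one_self[of 1, simplified])
    also have "\<dots> = exp (real n + 1)" by (simp add: exp_of_nat_mult[symmetric] exp_add add.commute)
    also have "\<dots> \<le> exp (2 * real n)" using n3 by simp
    finally have e2: "(2::real) ^ n + 1 \<le> exp (2 * real n)" .
    have "prob (A n) \<le> (2 ^ n + 1) * (1 - p n) ^ m n" using Ab[OF m0] c0 by simp
    also have "\<dots> \<le> exp (2 * real n) * exp (- 3 * real n)"
      using e1 e2 p1 by (intro mult_mono) auto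
    also have "\<dots> = exp (- real n)" by (simp add: exp_add[symmetric])
    finally show ?thesis .
  qed
  have sumA: "summable (\<lambda>n. measure M (A n))"
  proof (rule summable_comparison_test')
    show "summable (\<lambda>n. exp (- real n))"
    proof -
      have "norm (exp (-1::real)) < 1" by simp
      from summable_geometric[OF this] show ?thesis by (simp add: exp_of_nat_mult[symmetric])
    qed
    show "norm (measure M (A n)) \<le> exp (- real n)" if "n \<ge> max 4 N1" for n
      using Ab2[OF that] by simp
  qed
  have "AE \<omega> in M. eventually (\<lambda>n. \<omega> \<in> space M - A n) sequentially"
    by (rule borel_cantelli_AE1) (use Am sumA in \<open>auto simp: emeasure_eq_measure\<close>)
  moreover have "AE \<omega> in M. continuous_on {0..} (\<lambda>t. B t \<omega>)" using bm by blast
  ultimately show ?thesis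
  proof eventually_elim
    case (elim \<omega>)
    from elim(1) obtain N0 where N0: "\<And>n. n \<ge> N0 \<Longrightarrow> \<omega> \<in> space M - A n"
      by (auto simp: eventually_sequentially)
    show ?case
    proof (intro exI[of _ "max 1 N0"] conjI allI impI)
      fix n :: nat and l :: int
      assume n: "max 1 N0 \<le> n"
      assume l: "2 ^ (n - 1) \<le> real_of_int l \<and> real_of_int l \<le> 2 ^ n - real n powr (3/2)"
      have "(1::real) \<le> 2 ^ (n - 1)" by simp
      hence l1: "1 \<le> l" using l by linarith
      define j where "j = nat l"
      have lj: "l = int j" using l1 unfolding j_def by simp
      have "real_of_int l \<le> 2 ^ n" using l by (smt (verit) powr_ge_zero)
      hence "j \<le> 2 ^ n" using lj by (metis of_int_of_nat_eq of_nat_le_iff of_nat_numeral of_nat_power)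
      moreover have "\<omega> \<notin> A n" using N0 n by auto
      ultimately have "\<omega> \<notin> F n j" unfolding A_def by auto
      moreover have "\<omega> \<in> space M" using N0 n by auto
      ultimately obtain k where k: "k < m n" "\<bar>X j k \<omega>\<bar> > c n" unfolding F_def by auto
      have "real (k + 1) \<le> real (m n)" using k by linarith
      also have "\<dots> = real n * real (s n)" unfolding m_def by simp
      also have "\<dots> \<le> real n * sqrt (real n)" unfolding s_def
        by (intro mult_left_mono) auto
      also have "\<dots> = real n powr (3/2)" by (simp add: powr32)
      finally have kb: "real k \<le> real n powr (3/2) - 1" by simp
      have cont: "continuous_on {real j + real k .. real j + real (Suc k)} (\<lambda>t. B t \<omega>)"
        using elim(2) by (rule continuous_on_subset) auto
      have "\<bar>X j k \<omega>\<bar> \<le> Osc (\<lambda>t. B t \<omega>) (real j + real k) (real j + real (Suc k))"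
        unfolding X_def by (rule osc_ge[OF cont]) simp
      show "\<exists>k::int. 0 \<le> k \<and> real_of_int k \<le> real n powr (3/2) - 1 \<and>
                  Osc (\<lambda>t. B t \<omega>) (real_of_int (l + k)) (real_of_int (l + k + 1)) > ln (ln (real n))"
      proof (intro exI[of _ "int k"] conjI)
        show "Osc (\<lambda>t. B t \<omega>) (real_of_int (l + int k)) (real_of_int (l + int k + 1)) > ln (ln (real n))"
          using k(2) \<open>\<bar>X j k \<omega>\<bar> \<le> _\<close> unfolding lj c_def by (simp add: add.commute add.left_commute)
      qed (use kb in auto)
    qed simp
  qed
qed

end
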